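(* Let $\alpha>0$ and let $w:\mathbb{R}^n\to\mathbb{R}_+$ be a $(-1/\alpha)$-concave function with $w(0)>0$. For $0<a<\alpha$ let \[ K_a(w)=\left\{x\in\mathbb{R}^n:\ a\int_0^{+\infty}t^{a-1}w(tx)\,dt\ge w(0)\right\}. \] Then for any $0<a\le b<\alpha$, \[ \left(\frac{w(0)}{\|w\|_\infty}\right)^{\frac1a-\frac1b}K_a(w)\subset K_b(w)\subset\frac{(bB(b,\alpha-b))^{1/b}}{(aB(a,\alpha-a))^{1/a}}\,K_a(w). \]
   Context: A function $w\ge0$ is $(-1/\alpha)$-concave ($\alpha>0$) if $w((1-\lambda)x+\lambda y)\ge((1-\lambda)w(x)^{-1/\alpha}+\lambda w(y)^{-1/\alpha})^{-\alpha}$ whenever $w(x)w(y)>0$, $\lambda\in[0,1]$. $B$ is the Beta function $B(x,y)=\int_0^1u^{x-1}(1-u)^{y-1}du$. *)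

theory Defs
  imports "HOL-Analysis.Analysis"
begin

definition neg_inv_concave :: "real \<Rightarrow> ('a::real_vector \<Rightarrow> real) \<Rightarrow> bool" where
  "neg_inv_concave \<alpha> w \<longleftrightarrow> (\<forall>x. 0 \<le> w x) \<and>
     (\<forall>x y l. w x * w y > 0 \<longrightarrow> 0 \<le> l \<longrightarrow> l \<le> 1 \<longrightarrow>
        w ((1 - l) *\<^sub>R x + l *\<^sub>R y) \<ge>
        ((1 - l) * w x powr (-1/\<alpha>) + l * w y powr (-1/\<alpha>)) powr (-\<alpha>))"

definition K_set :: "real \<Rightarrow> ('a::euclidean_space \<Rightarrow> real) \<Rightarrow> 'a set" where
  "K_set a w = {x. ennreal a * (\<integral>\<^sup>+ t \<in> {0<..}. ennreal (t powr (a - 1) * w (t *\<^sub>R x)) \<partial>lborel)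
                     \<ge> ennreal (w 0)}"

definition sup_norm :: "('a \<Rightarrow> real) \<Rightarrow> ereal" where
  "sup_norm w = (SUP x. ereal (w x))"

end

theory Submission
  imports Defs
begin


lemma beta_int:
  fixes p \<alpha> s :: real
  assumes p: "0 < p" "p < \<alpha>" and s: "s > 0"
  shows "((\<lambda>t. t powr (p-1) * (1+s*t) powr (-\<alpha>)) has_integral (s powr (-p) * Beta p (\<alpha>-p))) {0<..}"
proof -
  define S where "S = {0<..<(1::real)}"
  define g where "g = (\<lambda>u::real. u / (s*(1-u)))"
  define g' where "g' = (\<lambda>u::real. 1 / (s*(1-u)^2))"
  define f where "f = (\<lambda>t::real. t powr (p-1) * (1+s*t) powr (-\<alpha>))"
  have der: "(g has_field_derivative g' u) (at u within S)" if "u \<in> S" for u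
  proof -
    have "(g has_field_derivative g' u) (at u)"
      unfolding g_def g'_def using that s
      apply (auto intro!: derivative_eq_intros simp: S_def)
      apply (subgoal_tac "s*(1-u) \<noteq> 0")
       apply (simp add: divide_simps power2_eq_square)
       apply (simp add: algebra_simps)
      apply simp
      done
    then show ?thesis by (metis has_field_derivative_at_within)
  qed
  have inj: "inj_on g S"
  proof
    fix x y assume "x \<in> S" "y \<in> S" "g x = g y"
    then show "x = y" using s by (auto simp: g_def S_def field_simps)
  qed
  have img: "g ` S = {0<..}"
  proof
    show "g ` S \<subseteq> {0<..}" using s by (auto simp: g_def S_def)
    show "{0<..} \<subseteq> g ` S"
    proof
      fix t :: real assume t: "t \<in> {0<..}"
      have pos: "0 < 1+s*t" using s t by (simp add: add_pos_pos)
      have e1: "s*(1 - s*t/(1+s*t)) = s/(1+s*t)" using pos by (simp add: field_simps)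
      have "g (s*t/(1+s*t)) = t" unfolding g_def e1 using s pos by simp
      moreover have "s*t/(1+s*t) \<in> S" using s t pos by (auto simp: S_def field_simps)
      ultimately show "t \<in> g ` S" by (metis image_eqI)
    qed
  qed
  have eq: "\<bar>g' u\<bar> * f (g u) = s powr (-p) * (u powr (p-1) * (1-u) powr (\<alpha>-p-1))" if "u \<in> S" for u
  proof -
    from that have u: "0 < u" "u < 1" by (auto simp: S_def)
    have "1 + s * g u = 1/(1-u)" using u s by (simp add: g_def field_simps)
    then have "(1 + s * g u) powr (-\<alpha>) = (1-u) powr \<alpha>"
      using u by (simp add: powr_divide powr_minus_divide)
    moreover have "g u powr (p-1) = u powr (p-1) * s powr (1-p) * (1-u) powr (1-p)"
    proof -
      have i: "y powr (1-p) = 1 / y powr (p-1)" for y :: real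
        by (metis minus_diff_eq powr_minus_divide)
      show ?thesis
        using u s unfolding g_def i
        by (simp add: powr_divide powr_mult)
    qed
    moreover have "\<bar>g' u\<bar> = s powr (-1) * (1-u) powr (-2)"
      using u s by (simp add: g'_def powr_minus_divide powr_realpow power2_eq_square)
    ultimately have "\<bar>g' u\<bar> * f (g u) = (s powr (-1) * s powr (1-p)) * (u powr (p-1) * ((1-u) powr (-2) * (1-u) powr (1-p) * (1-u) powr \<alpha>))"
      unfolding f_def by (simp add: ac_simps)
    also have "\<dots> = s powr (-p) * (u powr (p-1) * (1-u) powr (\<alpha>-p-1))"
    proof -
      have h1: "s powr (-1) * s powr (1-p) = s powr (-1 + (1-p))" by (simp only: powr_add)
      have h2: "(1-u) powr (-2) * (1-u) powr (1-p) * (1-u) powr \<alpha> = (1-u) powr (-2 + (1-p) + \<alpha>)"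
        by (simp only: powr_add)
      have h3: "-2 + (1-p) + \<alpha> = \<alpha>-p-1" "-1 + (1-p) = -p" by simp_all
      show ?thesis unfolding h1 h2 h3 ..
    qed
    finally show ?thesis .
  qed
  have B: "((\<lambda>u. u powr (p-1) * (1-u) powr (\<alpha>-p-1)) has_integral Beta p (\<alpha>-p)) S"
    using has_integral_Beta_real[of p "\<alpha>-p"] p by (simp add: has_integral_Icc_iff_Ioo S_def)
  then have B': "((\<lambda>u. s powr (-p) * (u powr (p-1) * (1-u) powr (\<alpha>-p-1))) has_integral (s powr (-p) * Beta p (\<alpha>-p))) S"
    by (rule has_integral_mult_right)
  have B'': "((\<lambda>u. \<bar>g' u\<bar> * f (g u)) has_integral (s powr (-p) * Beta p (\<alpha>-p))) S"
    using B' by (rule has_integral_cong[THEN iffD2, rotated]) (simp add: eq)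
  have "(\<lambda>u. \<bar>g' u\<bar> * f (g u)) absolutely_integrable_on S"
    using B'' by (intro nonnegative_absolutely_integrable_1) (auto simp: f_def has_integral_integrable)
  then have "f absolutely_integrable_on (g ` S) \<and> integral (g ` S) f = s powr (-p) * Beta p (\<alpha>-p)"
    using has_absolute_integral_change_of_variables_1'[OF _ der inj, where b="s powr (-p) * Beta p (\<alpha>-p)" and f=f]
      B'' by (auto simp: S_def integral_unique)
  then show ?thesis
    using img by (auto simp: f_def absolutely_integrable_on_def has_integral_iff)
qed



definition mom :: "real \<Rightarrow> (real \<Rightarrow> real) \<Rightarrow> ennreal" where
  "mom p f = (\<integral>\<^sup>+ t \<in> {0<..}. ennreal (t powr (p - 1) * f t) \<partial>lborel)"

definition wt :: "real \<Rightarrow> real \<Rightarrow> real" where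
  "wt p t = indicator {0<..} t * t powr (p - 1)"

lemma wt_nonneg: "0 \<le> wt p t" by (simp add: wt_def)

lemma wt_meas[measurable]: "wt p \<in> borel_measurable borel"
  unfolding wt_def by measurable

lemma mom_alt: "mom p f = (\<integral>\<^sup>+ t. ennreal (wt p t * f t) \<partial>lborel)"
  unfolding mom_def wt_def by (intro nn_integral_cong) (auto split: split_indicator)

lemma mom_scale:
  assumes [measurable]: "f \<in> borel_measurable borel" and c: "c > 0"
  shows "mom p f = ennreal (c powr p) * mom p (\<lambda>t. f (c*t))"
proof -
  have "mom p f = ennreal \<bar>c\<bar> * (\<integral>\<^sup>+ x. ennreal (wt p (0 + c*x) * f (0 + c*x)) \<partial>lborel)"
    unfolding mom_alt by (rule nn_integral_real_affine) (use c in auto)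
  also have "(\<lambda>x. ennreal (wt p (0 + c*x) * f (0 + c*x))) = (\<lambda>x. ennreal (c powr (p-1)) * ennreal (wt p x * f (c*x)))"
  proof
    fix x
    have "wt p (0 + c*x) * f (0 + c*x) = c powr (p-1) * (wt p x * f (c*x))"
      using c by (auto simp: wt_def powr_mult split: split_indicator simp add: zero_less_mult_iff)
    then show "ennreal (wt p (0 + c*x) * f (0 + c*x)) = ennreal (c powr (p-1)) * ennreal (wt p x * f (c*x))"
      by (simp only: ennreal_mult' powr_ge_zero)
  qed
  also have "ennreal \<bar>c\<bar> * (\<integral>\<^sup>+ x. ennreal (c powr (p-1)) * ennreal (wt p x * f (c*x)) \<partial>lborel)
     = ennreal \<bar>c\<bar> * ennreal (c powr (p-1)) * mom p (\<lambda>t. f (c*t))"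
    unfolding mom_alt by (subst nn_integral_cmult) (auto simp: mult.assoc)
  also have "ennreal \<bar>c\<bar> * ennreal (c powr (p-1)) = ennreal (c powr p)"
    using c by (simp add: ennreal_mult'[symmetric] powr_mult_base)
  finally show ?thesis .
qed

lemma mom_scale':
  assumes [measurable]: "f \<in> borel_measurable borel" and c: "c > 0"
  shows "mom p (\<lambda>t. f (c*t)) = ennreal (c powr (-p)) * mom p f"
proof -
  have "ennreal (c powr (-p)) * mom p f = ennreal (c powr (-p)) * ennreal (c powr p) * mom p (\<lambda>t. f (c*t))"
    using mom_scale[OF assms, of p] by (simp add: mult.assoc)
  also have "ennreal (c powr (-p)) * ennreal (c powr p) = 1"
    using c by (simp add: ennreal_mult'[symmetric] powr_add[symmetric])
  finally show ?thesis by simp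
qed

lemma mom_has_integral:
  assumes "\<And>t. t > 0 \<Longrightarrow> 0 \<le> f t" and "((\<lambda>t. t powr (p-1) * f t) has_integral I) {0<..}"
  shows "mom p f = ennreal I"
proof -
  have "mom p f = integral\<^sup>N lborel (\<lambda>x. indicator {0<..} x * (x powr (p-1) * f x))"
    unfolding mom_def by (intro nn_integral_cong) (auto split: split_indicator)
  also have "\<dots> = I"
    by (rule nn_integral_has_integral_lebesgue) (use assms in auto)
  finally show ?thesis .
qed



lemma decomp_int:
  fixes f g r :: "real \<Rightarrow> real"
  assumes [measurable]: "f \<in> borel_measurable borel" "g \<in> borel_measurable borel" "r \<in> borel_measurable borel"
    and "\<And>t. 0 \<le> f t" "\<And>t. 0 \<le> g t" "\<And>t. 0 \<le> r t"
  shows "(\<integral>\<^sup>+t. ennreal (r t * f t) \<partial>lborel) + (\<integral>\<^sup>+t. ennreal (r t * max 0 (g t - f t)) \<partial>lborel)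
       = (\<integral>\<^sup>+t. ennreal (r t * g t) \<partial>lborel) + (\<integral>\<^sup>+t. ennreal (r t * max 0 (f t - g t)) \<partial>lborel)"
proof -
  have "(\<integral>\<^sup>+t. ennreal (r t * f t) \<partial>lborel) + (\<integral>\<^sup>+t. ennreal (r t * max 0 (g t - f t)) \<partial>lborel)
      = (\<integral>\<^sup>+t. ennreal (r t * f t) + ennreal (r t * max 0 (g t - f t)) \<partial>lborel)"
    by (rule nn_integral_add[symmetric]) auto
  also have "\<dots> = (\<integral>\<^sup>+t. ennreal (r t * g t) + ennreal (r t * max 0 (f t - g t)) \<partial>lborel)"
  proof (intro nn_integral_cong)
    fix t
    have "r t * f t + r t * max 0 (g t - f t) = r t * g t + r t * max 0 (f t - g t)"
      by (auto simp: max_def algebra_simps)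
    then show "ennreal (r t * f t) + ennreal (r t * max 0 (g t - f t)) = ennreal (r t * g t) + ennreal (r t * max 0 (f t - g t))"
      using assms(4-6)[of t]
      by (subst (1 2) ennreal_plus[symmetric]) (simp_all)
  qed
  also have "\<dots> = (\<integral>\<^sup>+t. ennreal (r t * g t) \<partial>lborel) + (\<integral>\<^sup>+t. ennreal (r t * max 0 (f t - g t)) \<partial>lborel)"
    by (rule nn_integral_add) auto
  finally show ?thesis .
qed

lemma crossing:
  fixes f g u v :: "real \<Rightarrow> real" and c :: real
  assumes [measurable]: "f \<in> borel_measurable borel" "g \<in> borel_measurable borel"
     "u \<in> borel_measurable borel" "v \<in> borel_measurable borel"
  and nonneg: "\<And>t. 0 \<le> f t" "\<And>t. 0 \<le> g t" "\<And>t. 0 \<le> u t" "\<And>t. 0 \<le> v t" and c: "0 \<le> c"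
  and P: "\<And>t. g t < f t \<Longrightarrow> c * u t \<le> v t"
  and N: "\<And>t. f t < g t \<Longrightarrow> v t \<le> c * u t"
  and ug: "(\<integral>\<^sup>+t. ennreal (u t * g t) \<partial>lborel) \<le> (\<integral>\<^sup>+t. ennreal (u t * f t) \<partial>lborel)"
  and ugfin: "(\<integral>\<^sup>+t. ennreal (u t * g t) \<partial>lborel) < \<infinity>"
  and vgfin: "(\<integral>\<^sup>+t. ennreal (v t * g t) \<partial>lborel) < \<infinity>"
  shows "(\<integral>\<^sup>+t. ennreal (v t * g t) \<partial>lborel) \<le> (\<integral>\<^sup>+t. ennreal (v t * f t) \<partial>lborel)"
proof -
  define Pf where "Pf = (\<lambda>t. max 0 (f t - g t))"
  define Nf where "Nf = (\<lambda>t. max 0 (g t - f t))"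
  let ?I = "\<lambda>r h. (\<integral>\<^sup>+t. ennreal (r t * h t) \<partial>lborel)"
  have "?I u g + ?I u Nf \<le> ?I u f + ?I u Nf" using ug by (rule add_right_mono)
  also have "\<dots> = ?I u g + ?I u Pf" unfolding Pf_def Nf_def by (rule decomp_int) (use nonneg in auto)
  finally have 1: "?I u Nf \<le> ?I u Pf" using ugfin by (auto simp: ennreal_add_left_cancel_le)
  have 2: "?I v Nf \<le> ennreal c * ?I u Nf"
  proof -
    have "?I v Nf \<le> (\<integral>\<^sup>+t. ennreal c * ennreal (u t * Nf t) \<partial>lborel)"
    proof (intro nn_integral_mono)
      fix t
      have "v t * Nf t \<le> c * (u t * Nf t)"
      proof (cases "f t < g t")
        case True
        have "0 \<le> Nf t" by (simp add: Nf_def)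
        then show ?thesis using mult_right_mono[OF N[OF True], of "Nf t"] by (simp add: mult.assoc)
      qed (auto simp: Nf_def)
      then show "ennreal (v t * Nf t) \<le> ennreal c * ennreal (u t * Nf t)"
        using c by (simp add: ennreal_mult'[symmetric] ennreal_leI)
    qed
    also have "\<dots> = ennreal c * ?I u Nf" by (rule nn_integral_cmult) (auto simp: Nf_def)
    finally show ?thesis .
  qed
  have 3: "ennreal c * ?I u Pf \<le> ?I v Pf"
  proof -
    have "ennreal c * ?I u Pf = (\<integral>\<^sup>+t. ennreal c * ennreal (u t * Pf t) \<partial>lborel)"
      by (rule nn_integral_cmult[symmetric]) (auto simp: Pf_def)
    also have "\<dots> \<le> ?I v Pf"
    proof (intro nn_integral_mono)
      fix t
      have "c * (u t * Pf t) \<le> v t * Pf t"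
      proof (cases "g t < f t")
        case True
        have "0 \<le> Pf t" by (simp add: Pf_def)
        then show ?thesis using mult_right_mono[OF P[OF True], of "Pf t"] by (simp add: mult.assoc)
      qed (auto simp: Pf_def)
      then show "ennreal c * ennreal (u t * Pf t) \<le> ennreal (v t * Pf t)"
        using c by (simp add: ennreal_mult'[symmetric] ennreal_leI)
    qed
    finally show ?thesis .
  qed
  have 4: "?I v Nf \<le> ?I v Pf"
    using 2 mult_left_mono[OF 1, of "ennreal c"] 3 by (meson order_trans zero_le)
  have 5: "?I v Nf < \<infinity>"
  proof -
    have "?I v Nf \<le> ?I v g"
    proof (intro nn_integral_mono ennreal_leI mult_left_mono)
      fix t show "Nf t \<le> g t" "0 \<le> v t" using nonneg(1,2,4)[of t] by (simp_all add: Nf_def)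
    qed
    then show ?thesis using vgfin by simp
  qed
  have "?I v g + ?I v Nf \<le> ?I v g + ?I v Pf" using 4 by (rule add_left_mono)
  also have "\<dots> = ?I v f + ?I v Nf" unfolding Pf_def Nf_def by (rule decomp_int[symmetric]) (use nonneg in auto)
  finally have X: "?I v g + ?I v Nf \<le> ?I v f + ?I v Nf" .
  have "?I v Nf + ?I v g \<le> ?I v Nf + ?I v f" using X by (simp only: add.commute[of "?I v Nf"])
  then have "?I v Nf = \<infinity> \<or> ?I v g \<le> ?I v f" by (rule ennreal_add_left_cancel_le[THEN iffD1])
  then show ?thesis by (elim disjE) (use 5 in simp_all)
qed



lemma nic_nonneg: "neg_inv_concave \<alpha> w \<Longrightarrow> 0 \<le> w x"
  unfolding neg_inv_concave_def by blast

lemma nic_min: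
  assumes nic: "neg_inv_concave \<alpha> w" and al: "\<alpha> > 0" and pos: "w x * w y > 0"
    and l: "0 \<le> l" "l \<le> 1"
  shows "min (w x) (w y) \<le> w ((1-l) *\<^sub>R x + l *\<^sub>R y)"
proof -
  define e where "e = -1/\<alpha>"
  have e: "e < 0" "e * (-\<alpha>) = 1" using al by (auto simp: e_def)
  have A: "w x > 0" and B: "w y > 0"
    using pos nic_nonneg[OF nic, of x] nic_nonneg[OF nic, of y]
    by (auto simp: zero_less_mult_iff)
  define m where "m = min (w x) (w y)"
  have m: "0 < m" "m \<le> w x" "m \<le> w y" using A B by (auto simp: m_def)
  define Q where "Q = (1 - l) * w x powr e + l * w y powr e"
  have "w x powr e \<le> m powr e" by (rule powr_mono2') (use e m in auto)
  moreover have "w y powr e \<le> m powr e" by (rule powr_mono2') (use e m in auto)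
  ultimately have "Q \<le> (1-l) * m powr e + l * m powr e"
    unfolding Q_def using l by (intro add_mono mult_left_mono) auto
  then have Qle: "Q \<le> m powr e" by (simp add: algebra_simps)
  have Qpos: "0 < Q"
  proof (cases "l = 0")
    case True then show ?thesis using A by (simp add: Q_def)
  next
    case False
    then have "0 < l * w y powr e" using l B by simp
    moreover have "0 \<le> (1 - l) * w x powr e" using l by simp
    ultimately show ?thesis unfolding Q_def by linarith
  qed
  have "m = (m powr e) powr (-\<alpha>)" using m e by (simp add: powr_powr)
  also have "\<dots> \<le> Q powr (-\<alpha>)" by (rule powr_mono2') (use al Qpos Qle in auto)
  also have "\<dots> \<le> w ((1-l) *\<^sub>R x + l *\<^sub>R y)"
    using nic pos l unfolding neg_inv_concave_def Q_def e_def by blast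
  finally show ?thesis by (simp add: m_def)
qed

lemma ray_meas:
  assumes nic: "neg_inv_concave \<alpha> w" and al: "\<alpha> > 0"
  shows "(\<lambda>t. w (t *\<^sub>R x)) \<in> borel_measurable borel"
  unfolding borel_measurable_iff_greater
proof
  fix c :: real
  have "is_interval {t. c < w (t *\<^sub>R x)}"
    unfolding is_interval_convex_1 convex_alt
  proof (intro ballI allI impI)
    fix t1 t2 u :: real
    assume t1: "t1 \<in> {t. c < w (t *\<^sub>R x)}" and t2: "t2 \<in> {t. c < w (t *\<^sub>R x)}" and u: "0 \<le> u \<and> u \<le> 1"
    show "(1 - u) *\<^sub>R t1 + u *\<^sub>R t2 \<in> {t. c < w (t *\<^sub>R x)}"
    proof (cases "c < 0")
      case True then show ?thesis using nic_nonneg[OF nic] by (auto intro: less_le_trans)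
    next
      case False
      then have p: "w (t1 *\<^sub>R x) * w (t2 *\<^sub>R x) > 0" using t1 t2 by simp
      have eq: "(1 - u) *\<^sub>R (t1 *\<^sub>R x) + u *\<^sub>R (t2 *\<^sub>R x) = ((1 - u) *\<^sub>R t1 + u *\<^sub>R t2) *\<^sub>R x"
        by (simp add: scaleR_add_left)
      have "min (w (t1 *\<^sub>R x)) (w (t2 *\<^sub>R x)) \<le> w (((1 - u) *\<^sub>R t1 + u *\<^sub>R t2) *\<^sub>R x)"
        using nic_min[OF nic al p, of u] u eq by simp
      then show ?thesis using t1 t2 by auto
    qed
  qed
  then show "{t \<in> space borel. c < w (t *\<^sub>R x)} \<in> sets borel"
    by (simp add: real_interval_borel_measurable)
qed

lemma ray_cross:
  assumes nic: "neg_inv_concave \<alpha> w" and al: "\<alpha> > 0" and w0: "w 0 > 0" and s: "s \<ge> 0"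
    and t: "0 < t1" "t1 < t2"
    and gt: "w (t2 *\<^sub>R x) > w 0 * (1 + s*t2) powr (-\<alpha>)"
  shows "w 0 * (1 + s*t1) powr (-\<alpha>) \<le> w (t1 *\<^sub>R x)"
proof -
  define e where "e = -1/\<alpha>"
  have e: "e < 0" "(-\<alpha>) * e = 1" "e * (-\<alpha>) = 1" using al by (auto simp: e_def)
  define W where "W = w 0"
  define p where "p = w (t2 *\<^sub>R x)"
  define l where "l = t1 / t2"
  have l: "0 < l" "l < 1" "l * t2 = t1" using t by (auto simp: l_def)
  have s1: "1 + s*t1 > 0" "1 + s*t2 > 0" using s t by (auto intro: add_pos_nonneg)
  have ppos: "p > 0" using gt w0 s1 unfolding p_def by (smt (verit) mult_pos_pos powr_gt_zero)
  have prod: "w 0 * w (t2 *\<^sub>R x) > 0" using ppos w0 by (simp add: p_def)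
  have pt: "(1 - l) *\<^sub>R 0 + l *\<^sub>R (t2 *\<^sub>R x) = t1 *\<^sub>R x" using l by simp
  define Q where "Q = (1 - l) * W powr e + l * p powr e"
  have ineq: "Q powr (-\<alpha>) \<le> w (t1 *\<^sub>R x)"
    using nic prod l unfolding neg_inv_concave_def Q_def e_def W_def p_def pt[symmetric]
    by (metis less_eq_real_def)
  have "p powr e < (W * (1 + s*t2) powr (-\<alpha>)) powr e"
    by (rule powr_less_mono2_neg) (use e w0 s1 gt in \<open>auto simp: W_def p_def\<close>)
  also have "\<dots> = W powr e * (1 + s*t2)"
    using w0 s1 e by (simp add: W_def powr_mult powr_powr)
  finally have pe: "p powr e < W powr e * (1 + s*t2)" .
  have "Q \<le> (1 - l) * W powr e + l * (W powr e * (1 + s*t2))"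
    unfolding Q_def using pe l by (intro add_left_mono mult_left_mono) auto
  also have "\<dots> = W powr e * (1 + s * (l * t2))" by (simp add: algebra_simps)
  finally have Qle: "Q \<le> W powr e * (1 + s*t1)" using l by simp
  have Qpos: "0 < Q" unfolding Q_def using l ppos w0 by (intro add_nonneg_pos) (auto simp: W_def)
  have "W * (1 + s*t1) powr (-\<alpha>) = (W powr e * (1 + s*t1)) powr (-\<alpha>)"
    using w0 s1 e by (simp add: W_def powr_mult powr_powr)
  also have "\<dots> \<le> Q powr (-\<alpha>)" by (rule powr_mono2') (use al Qpos Qle in auto)
  finally show ?thesis using ineq by (simp add: W_def)
qed


lemma mom_box:
  assumes M: "0 \<le> M" and s: "0 \<le> s" and p: "0 < p"
  shows "mom p (\<lambda>t. M * indicator {0..s} t) = ennreal (M * s powr p / p)"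
proof -
  have "mom p (\<lambda>t. M * indicator {0..s} t) = integral\<^sup>N lborel (\<lambda>x. indicator {0..s} x * (M * x powr (p-1)))"
    unfolding mom_def by (intro nn_integral_cong) (auto split: split_indicator simp: mult.commute)
  also have "\<dots> = M * (s powr p / p)"
  proof (rule nn_integral_has_integral_lebesgue)
    show "((\<lambda>x. M * x powr (p-1)) has_integral (M * (s powr p / p))) {0..s}"
      using has_integral_mult_right[OF has_integral_powr_from_0[of "p-1" s], of M] p s by simp
  qed (use M in auto)
  finally show ?thesis by simp
qed

lemma mom_const_inf:
  assumes c: "0 < c" and p: "0 < p"
  shows "mom p (\<lambda>t. c) = \<infinity>"
proof (rule ccontr)
  assume ninf: "mom p (\<lambda>t. c) \<noteq> \<infinity>"
  have "mom p (\<lambda>t. c * indicator {0..1} t) \<le> mom p (\<lambda>t. c)"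
    unfolding mom_def using c
    by (intro nn_integral_mono) (auto split: split_indicator intro!: ennreal_leI mult_left_mono simp: indicator_def)
  then have lb: "ennreal (c / p) \<le> mom p (\<lambda>t. c)" using mom_box[of c 1 p] c p by simp
  have eq: "mom p (\<lambda>t. c) = ennreal (2 powr (-p)) * mom p (\<lambda>t. c)"
    using mom_scale'[of "\<lambda>t. c" 2 p] by simp
  obtain r where r: "mom p (\<lambda>t. c) = ennreal r" "0 \<le> r" using ninf by (cases "mom p (\<lambda>t. c)") auto
  have "ennreal r = ennreal (2 powr (-p) * r)" using eq r by (simp add: ennreal_mult')
  then have "r = 2 powr (-p) * r" using r by (simp add: ennreal_inj)
  moreover have "2 powr (-p) < (1::real)"
  proof -
    have "(2::real) powr (-p) < 2 powr 0" by (rule powr_less_mono) (use p in auto)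
    then show ?thesis by simp
  qed
  ultimately have "r = 0" using r(2) by (metis less_irrefl mult_cancel_right2 mult_less_cancel_right1 mult_less_le_imp_less)
  moreover have "0 < c / p" using c p by simp
  ultimately show False using lb r c p by simp
qed

lemma equal_case:
  fixes f g :: "real \<Rightarrow> real"
  assumes [measurable]: "f \<in> borel_measurable borel" "g \<in> borel_measurable borel"
    and nonneg: "\<And>t. 0 \<le> f t" "\<And>t. 0 \<le> g t"
    and le: "\<And>t. t > 0 \<Longrightarrow> f t \<le> g t"
    and m: "mom q g \<le> mom q f" and fin: "mom q g < \<infinity>"
  shows "mom p g \<le> mom p f"
proof -
  let ?X = "\<integral>\<^sup>+t. ennreal (wt q t * max 0 (g t - f t)) \<partial>lborel"
  have d: "mom q f + ?X = mom q g + (\<integral>\<^sup>+t. ennreal (wt q t * max 0 (f t - g t)) \<partial>lborel)"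
    unfolding mom_alt by (rule decomp_int) (use nonneg wt_nonneg in auto)
  have z: "(\<integral>\<^sup>+t. ennreal (wt q t * max 0 (f t - g t)) \<partial>lborel) = 0"
  proof -
    have "(\<lambda>t. ennreal (wt q t * max 0 (f t - g t))) = (\<lambda>t. 0)"
    proof
      fix t show "ennreal (wt q t * max 0 (f t - g t)) = 0"
        using le[of t] by (cases "t > 0") (auto simp: wt_def)
    qed
    then show ?thesis by simp
  qed
  have fle: "mom q f \<le> mom q g"
    unfolding mom_def using le by (intro nn_integral_mono) (auto split: split_indicator intro!: ennreal_leI mult_left_mono)
  have "mom q f + ?X \<le> mom q f + 0" using d z m by simp
  then have X0: "?X = 0" using fle fin by (auto simp: ennreal_add_left_cancel_le)
  then have "AE t in lborel. ennreal (wt q t * max 0 (g t - f t)) = 0"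
    by (subst (asm) nn_integral_0_iff_AE) auto
  then have "AE t in lborel. ennreal (wt p t * g t) = ennreal (wt p t * f t)"
  proof (rule AE_mp, intro AE_I2 impI)
    fix t assume h: "ennreal (wt q t * max 0 (g t - f t)) = 0"
    show "ennreal (wt p t * g t) = ennreal (wt p t * f t)"
    proof (cases "t > 0")
      case True
      then have "wt q t > 0" by (simp add: wt_def)
      then have "max 0 (g t - f t) \<le> 0" using h
        by (metis ennreal_eq_0_iff mult_le_0_iff not_le less_eq_real_def)
      then have "g t = f t" using le[OF True] by simp
      then show ?thesis by simp
    qed (simp add: wt_def)
  qed
  then have "mom p g = mom p f" unfolding mom_alt by (rule nn_integral_cong_AE)
  then show ?thesis by simp
qed


lemma powr_split: "(t::real) powr (a - 1) = t powr (a - b) * t powr (b - 1)"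
  using powr_add[of t "a-b" "b-1"] by simp

lemma ennreal_div_le:
  assumes "0 < p" "0 \<le> y" "ennreal y \<le> ennreal p * X"
  shows "ennreal (y / p) \<le> X"
proof (cases X)
  case (real r)
  then have "y \<le> p * r" using assms by (simp add: ennreal_mult'[symmetric])
  then have "y / p \<le> r" using assms by (simp add: field_simps)
  then show ?thesis using real by (simp add: ennreal_leI)
qed simp

lemma le_ennreal_mult:
  assumes "0 < p" "0 \<le> y" "ennreal (y / p) \<le> X"
  shows "ennreal y \<le> ennreal p * X"
proof -
  have "ennreal y = ennreal p * ennreal (y / p)" using assms by (simp add: ennreal_mult'[symmetric])
  also have "\<dots> \<le> ennreal p * X" using assms(3) by (rule mult_left_mono) simp
  finally show ?thesis .
qed

lemma Beta_pos: "0 < p \<Longrightarrow> 0 < q \<Longrightarrow> Beta p q > (0::real)"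
  unfolding Beta_def by simp

lemma mom_psi:
  assumes p: "0 < p" "p < \<alpha>" and s: "s > 0" and W: "0 \<le> W"
  shows "mom p (\<lambda>t. W * (1 + s*t) powr (-\<alpha>)) = ennreal (W * (s powr (-p) * Beta p (\<alpha>-p)))"
proof (rule mom_has_integral)
  show "((\<lambda>t. t powr (p-1) * (W * (1 + s*t) powr (-\<alpha>))) has_integral (W * (s powr (-p) * Beta p (\<alpha>-p)))) {0<..}"
    using has_integral_mult_right[OF beta_int[OF p s], of W] by (simp add: ac_simps)
qed (use W in auto)

theorem corollary3:
  fixes w :: "'a::euclidean_space \<Rightarrow> real" and \<alpha> a b :: real
  assumes "\<alpha> > 0" and "neg_inv_concave \<alpha> w" and "w 0 > 0"
    and "0 < a" and "a \<le> b" and "b < \<alpha>"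
  shows "(\<lambda>x. (if a = b then 1 else real_of_ereal (ereal (w 0) / sup_norm w) powr (1/a - 1/b)) *\<^sub>R x)
           ` K_set a w \<subseteq> K_set b w \<and>
         K_set b w \<subseteq> (\<lambda>x. ((b * Beta b (\<alpha> - b)) powr (1/b) / (a * Beta a (\<alpha> - a)) powr (1/a)) *\<^sub>R x)
           ` K_set a w"
proof -
  note al = assms(1) and nic = assms(2) and w0 = assms(3) and ab = assms(4-6)
  have meas[measurable]: "\<And>x. (\<lambda>t. w (t *\<^sub>R x)) \<in> borel_measurable borel" using ray_meas[OF nic al] .
  have wnn: "\<And>z. 0 \<le> w z" using nic_nonneg[OF nic] .
  have Kdef: "\<And>p. K_set p w = {x. ennreal (w 0) \<le> ennreal p * mom p (\<lambda>t. w (t *\<^sub>R x))}"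
    unfolding K_set_def mom_def by simp
  have scale_ray: "mom p (\<lambda>t. w (t *\<^sub>R (c *\<^sub>R x))) = ennreal (c powr (-p)) * mom p (\<lambda>t. w (t *\<^sub>R x))"
    if c: "c > 0" for p c and x :: 'a
    using mom_scale'[OF meas[of x] c, of p] by (simp add: mult.commute)
  have b0: "0 < b" using ab by simp
  show ?thesis
  proof
    show "(\<lambda>x. (if a = b then 1 else real_of_ereal (ereal (w 0) / sup_norm w) powr (1/a - 1/b)) *\<^sub>R x)
           ` K_set a w \<subseteq> K_set b w"
    proof (cases "a = b")
      case True then show ?thesis by simp
    next
      case False
      then have ab': "a < b" using ab by simp
      have sup_ge: "ereal (w z) \<le> sup_norm w" for z unfolding sup_norm_def by (rule SUP_upper) simp
      show ?thesis
      proof (cases "sup_norm w = \<infinity>")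
        case True
        have "0 \<in> K_set b w"
          unfolding Kdef using mom_const_inf[OF w0 b0] b0 by simp
        then show ?thesis using True False by auto
      next
        case False
        then obtain M where M: "sup_norm w = ereal M"
          using sup_ge[of 0] by (cases "sup_norm w") auto
        have wle: "w z \<le> M" for z using sup_ge[of z] M by simp
        have M0: "0 < M" using wle[of 0] w0 by simp
        define q where "q = w 0 / M"
        have q: "0 < q" "q \<le> 1" using M0 w0 wle[of 0] by (auto simp: q_def)
        define lam where "lam = q powr (1/a - 1/b)"
        have lam: "0 < lam" using q by (simp add: lam_def)
        have fac: "(if a = b then 1 else real_of_ereal (ereal (w 0) / sup_norm w) powr (1/a - 1/b)) = lam"
          using \<open>a \<noteq> b\<close> M M0 by (simp add: lam_def q_def)
        show ?thesis unfolding fac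
        proof (rule image_subsetI)
          fix x assume x: "x \<in> K_set a w"
          let ?phi = "\<lambda>t. w (t *\<^sub>R x)"
          define s where "s = q powr (1/a)"
          have s: "0 < s" using q by (simp add: s_def)
          define g where "g = (\<lambda>t. M * indicator {0..s} t :: real)"
          have sa: "s powr a = q" using q ab by (simp add: s_def powr_powr)
          have sb: "s powr b = q powr (b/a)" using q ab by (simp add: s_def powr_powr)
          have mga: "mom a g = ennreal (w 0 / a)"
            unfolding g_def using mom_box[of M s a] M0 s ab sa by (simp add: q_def)
          have mgb: "mom b g = ennreal (M * s powr b / b)"
            unfolding g_def using mom_box[of M s b] M0 s b0 by simp
          have xa: "ennreal (w 0 / a) \<le> mom a ?phi"
            using x unfolding Kdef by (intro ennreal_div_le) (use ab w0 in auto)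
          have "(\<integral>\<^sup>+t. ennreal (wt b t * g t) \<partial>lborel) \<le> (\<integral>\<^sup>+t. ennreal (wt b t * ?phi t) \<partial>lborel)"
          proof (rule crossing[where u = "wt a" and c = "s powr (b-a)"])
            show "g \<in> borel_measurable borel" unfolding g_def by measurable
            show "\<And>t. 0 \<le> g t" unfolding g_def using M0 by simp
            show "0 \<le> s powr (b-a)" by simp
            show "s powr (b-a) * wt a t \<le> wt b t" if "g t < ?phi t" for t
            proof (cases "t > 0")
              case True
              have "t \<notin> {0..s}" using that wle[of "t *\<^sub>R x"] by (auto simp: g_def)
              then have "s \<le> t" using True by auto
              then have "s powr (b-a) \<le> t powr (b-a)" using s ab' by (intro powr_mono2) auto
              then show ?thesis using True powr_split[of t b a]
                by (simp add: wt_def mult_right_mono)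
            qed (simp add: wt_def)
            show "wt b t \<le> s powr (b-a) * wt a t" if "?phi t < g t" for t
            proof (cases "t > 0")
              case True
              have "t \<in> {0..s}" using that wnn[of "t *\<^sub>R x"] by (auto simp: g_def split: split_indicator_asm)
              then have "t \<le> s" by auto
              then have "t powr (b-a) \<le> s powr (b-a)" using True ab' by (intro powr_mono2) auto
              then show ?thesis using True powr_split[of t b a]
                by (simp add: wt_def mult_right_mono)
            qed (simp add: wt_def)
            show "(\<integral>\<^sup>+t. ennreal (wt a t * g t) \<partial>lborel) \<le> (\<integral>\<^sup>+t. ennreal (wt a t * ?phi t) \<partial>lborel)"
              using xa mga unfolding mom_alt by simp
            show "(\<integral>\<^sup>+t. ennreal (wt a t * g t) \<partial>lborel) < \<infinity>"
              using mga unfolding mom_alt by simp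
            show "(\<integral>\<^sup>+t. ennreal (wt b t * g t) \<partial>lborel) < \<infinity>"
              using mgb unfolding mom_alt by simp
          qed (use wnn wt_nonneg in auto)
          then have mb: "ennreal (M * s powr b / b) \<le> mom b ?phi" using mgb unfolding mom_alt by simp
          have key: "lam powr (-b) * (M * s powr b / b) = w 0 / b"
          proof -
            have "lam powr (-b) * s powr b = q powr ((1/a - 1/b) * (-b)) * q powr (b/a)"
              using q by (simp only: lam_def sb powr_powr)
            also have "\<dots> = q powr ((1/a - 1/b) * (-b) + b/a)" by (rule powr_add[symmetric])
            also have "(1/a - 1/b) * (-b) + b/a = 1" using ab b0 by (simp add: field_simps)
            finally have "lam powr (-b) * s powr b = q" using q by simp
            then show ?thesis using M0 by (simp add: q_def field_simps)
          qed
          have "ennreal (w 0 / b) = ennreal (lam powr (-b)) * ennreal (M * s powr b / b)"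
            by (subst ennreal_mult'[symmetric]) (simp, simp only: key)
          also have "\<dots> \<le> ennreal (lam powr (-b)) * mom b ?phi" using mb by (rule mult_left_mono) simp
          also have "\<dots> = mom b (\<lambda>t. w (t *\<^sub>R (lam *\<^sub>R x)))" using scale_ray[OF lam] by simp
          finally show "lam *\<^sub>R x \<in> K_set b w"
            unfolding Kdef using b0 w0 by (auto intro!: le_ennreal_mult)
        qed
      qed
    qed
  next
    show "K_set b w \<subseteq> (\<lambda>x. ((b * Beta b (\<alpha> - b)) powr (1/b) / (a * Beta a (\<alpha> - a)) powr (1/a)) *\<^sub>R x)
           ` K_set a w"
    proof
      fix x assume x: "x \<in> K_set b w"
      let ?phi = "\<lambda>t. w (t *\<^sub>R x)"
      define C where "C = (b * Beta b (\<alpha> - b)) powr (1/b) / (a * Beta a (\<alpha> - a)) powr (1/a)"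
      have Ba: "0 < Beta a (\<alpha> - a)" "0 < Beta b (\<alpha> - b)" using ab by (auto intro!: Beta_pos)
      have C: "0 < C" using Ba ab by (simp add: C_def)
      define s0 where "s0 = (b * Beta b (\<alpha> - b)) powr (1/b)"
      have s0: "0 < s0" using Ba ab by (simp add: s0_def)
      define psi where "psi = (\<lambda>t. w 0 * (1 + s0*t) powr (-\<alpha>))"
      have psi_meas[measurable]: "psi \<in> borel_measurable borel" unfolding psi_def by measurable
      have psi_nn: "\<And>t. 0 \<le> psi t" unfolding psi_def using w0 by simp
      have mpa: "mom a psi = ennreal (w 0 * (s0 powr (-a) * Beta a (\<alpha>-a)))"
        unfolding psi_def by (rule mom_psi) (use ab s0 w0 in auto)
      have mpb0: "mom b psi = ennreal (w 0 * (s0 powr (-b) * Beta b (\<alpha>-b)))"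
        unfolding psi_def by (rule mom_psi) (use ab s0 w0 in auto)
      have "s0 powr (-b) = 1 / (b * Beta b (\<alpha> - b))"
        using Ba ab by (simp add: s0_def powr_powr powr_minus_divide)
      then have mpb: "mom b psi = ennreal (w 0 / b)" using mpb0 Ba ab by simp
      have xb: "mom b psi \<le> mom b ?phi"
        using x unfolding Kdef mpb by (intro ennreal_div_le) (use ab w0 in auto)
      have keyle: "mom a psi \<le> mom a ?phi"
      proof -
        define D where "D = {t. 0 < t \<and> psi t < ?phi t}"
        have cross: "psi t \<le> ?phi t" if "0 < t" "t < t2" "t2 \<in> D" for t t2
          using ray_cross[OF nic al w0, of s0 t t2 x] that s0 by (simp add: D_def psi_def)
        show ?thesis
        proof (cases "D = {}")
          case True
          have "\<And>t. 0 < t \<Longrightarrow> ?phi t \<le> psi t"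
          proof -
            fix t :: real assume "0 < t"
            then have "t \<notin> D" using True by simp
            then show "?phi t \<le> psi t" using \<open>0 < t\<close> by (simp add: D_def not_less)
          qed
          then show ?thesis
            by (rule equal_case[where q = b, OF meas psi_meas wnn psi_nn _ xb]) (simp_all add: mpb)
        next
          case Dne: False
          show ?thesis
          proof (cases "bdd_above D")
            case False
            have "psi t \<le> ?phi t" if h: "0 < t" for t
            proof -
              obtain t2 where "t2 \<in> D" "t < t2" using False unfolding bdd_above_def by (meson not_le)
              then show ?thesis using cross h by blast
            qed
            then show ?thesis unfolding mom_def
              by (intro nn_integral_mono) (auto split: split_indicator intro!: ennreal_leI mult_left_mono)
          next
            case bdd: True
            define t0 where "t0 = Sup D"
            have upper: "t \<le> t0" if "t \<in> D" for t using cSup_upper[OF that bdd] by (simp add: t0_def)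
            obtain t1 where t1: "t1 \<in> D" using Dne by auto
            have t0: "0 < t0" using upper[OF t1] t1 by (auto simp: D_def)
            have below: "psi t \<le> ?phi t" if h: "0 < t" "t < t0" for t
            proof -
              obtain t2 where "t2 \<in> D" "t < t2" using h(2) less_cSup_iff[OF Dne bdd] by (auto simp: t0_def)
              then show ?thesis using cross h by blast
            qed
            have "(\<integral>\<^sup>+t. ennreal (wt a t * psi t) \<partial>lborel) \<le> (\<integral>\<^sup>+t. ennreal (wt a t * ?phi t) \<partial>lborel)"
            proof (rule crossing[where u = "wt b" and c = "t0 powr (a-b)"])
              show "0 \<le> t0 powr (a-b)" by simp
              show "t0 powr (a-b) * wt b t \<le> wt a t" if "psi t < ?phi t" for t
              proof (cases "t > 0")
                case True
                then have "t \<in> D" using that by (simp add: D_def)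
                then have "t \<le> t0" by (rule upper)
                then have "t0 powr (a-b) \<le> t powr (a-b)" using True ab by (intro powr_mono2') auto
                then show ?thesis using True powr_split[of t a b]
                  by (simp add: wt_def mult_right_mono)
              qed (simp add: wt_def)
              show "wt a t \<le> t0 powr (a-b) * wt b t" if "?phi t < psi t" for t
              proof (cases "t > 0")
                case True
                have "\<not> t < t0" using below[OF True] that by force
                then have "t0 \<le> t" by simp
                then have "t powr (a-b) \<le> t0 powr (a-b)" using t0 ab by (intro powr_mono2') auto
                then show ?thesis using True powr_split[of t a b]
                  by (simp add: wt_def mult_right_mono)
              qed (simp add: wt_def)
              show "(\<integral>\<^sup>+t. ennreal (wt b t * psi t) \<partial>lborel) \<le> (\<integral>\<^sup>+t. ennreal (wt b t * ?phi t) \<partial>lborel)"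
                using xb unfolding mom_alt by simp
              show "(\<integral>\<^sup>+t. ennreal (wt b t * psi t) \<partial>lborel) < \<infinity>"
                using mpb unfolding mom_alt by simp
              show "(\<integral>\<^sup>+t. ennreal (wt a t * psi t) \<partial>lborel) < \<infinity>"
                using mpa unfolding mom_alt by simp
            qed (use wnn wt_nonneg psi_nn in auto)
            then show ?thesis unfolding mom_alt .
          qed
        qed
      qed
      define y where "y = (1/C) *\<^sub>R x"
      have xy: "x = C *\<^sub>R y" using C by (simp add: y_def)
      have Cpow: "C powr a = s0 powr a / (a * Beta a (\<alpha> - a))"
        using Ba ab s0 by (simp add: C_def s0_def[symmetric] powr_divide powr_powr)
      have key: "C powr a * (w 0 * (s0 powr (-a) * Beta a (\<alpha>-a))) = w 0 / a"
        using Ba ab s0 by (simp add: Cpow powr_minus_divide field_simps)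
      have "ennreal (w 0 / a) = ennreal (C powr a) * ennreal (w 0 * (s0 powr (-a) * Beta a (\<alpha>-a)))"
        by (subst ennreal_mult'[symmetric]) (simp, simp only: key)
      also have "\<dots> \<le> ennreal (C powr a) * mom a ?phi" using keyle mpa by (intro mult_left_mono) auto
      also have "\<dots> = mom a (\<lambda>t. w (t *\<^sub>R y))" using scale_ray[of "1/C" a x] C by (simp add: y_def powr_minus_divide powr_divide)
      finally have "y \<in> K_set a w"
        unfolding Kdef using ab w0 by (auto intro!: le_ennreal_mult)
      then show "x \<in> (\<lambda>x. ((b * Beta b (\<alpha> - b)) powr (1/b) / (a * Beta a (\<alpha> - a)) powr (1/a)) *\<^sub>R x) ` K_set a w"
        using xy unfolding C_def by blast
    qed
  qed
qed

end
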